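(* Let $\pi$ be an irreducible permutation on $\mathcal{A}$ and let $v_1',v_2',v_3',v_4'\in\mathbb{Z}^{\mathcal{A}}$ satisfy $$\big(|\langle v_i',v_j'\rangle|\big)_{i,j=1}^4=\begin{pmatrix}0&0&0&1\\0&0&1&1\\0&1&0&1\\1&1&1&0\end{pmatrix}.$$ Then $T_{v_1'+v_2'}^2,\ T_{v_1'-v_2'}^2,\ T_{v_1'+v_3'}^2,\ T_{v_1'-v_3'}^2\in G_{\{v_1',v_2',v_3',v_4'\}}$.
   Context: $\mathcal{A}$ is a finite alphabet, $\pi=(\pi_{\mathrm t},\pi_{\mathrm b})$ a pair of bijections $\mathcal{A}\to\{1,\dots,|\mathcal{A}|\}$. $(\Omega_\pi)_{\alpha\beta}=+1$ if $\pi_{\mathrm t}(\alpha)<\pi_{\mathrm t}(\beta)$ and $\pi_{\mathrm b}(\alpha)>\pi_{\mathrm b}(\beta)$, $-1$ if $\pi_{\mathrm t}(\alpha)>\pi_{\mathrm t}(\beta)$ and $\pi_{\mathrm b}(\alpha)<\pi_{\mathrm b}(\beta)$, $0$ otherwise; $\langle u,v\rangle=u\Omega_\pi v^{\intercal}$ on $\mathbb{Z}^{\mathcal{A}}$ (identified with $H_1(M_\pi\setminus\Sigma_\pi;\mathbb{Z})$). For $v\in\mathbb{Z}^{\mathcal{A}}$ the symplectic transvection is $T_v(u)=u+\langle v,u\rangle v$. For a set $V\subseteq\mathbb{Z}^{\mathcal{A}}$, $G_V$ is the group generated by $\{T_v\}_{v\in V}$. *)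

theory Defs
  imports Main "HOL-Library.Function_Algebras"
begin

definition is_perm :: "('a::finite \<Rightarrow> nat) \<Rightarrow> ('a \<Rightarrow> nat) \<Rightarrow> bool" where
  "is_perm pt pb \<longleftrightarrow> bij_betw pt UNIV {1..card (UNIV::'a set)} \<and> bij_betw pb UNIV {1..card (UNIV::'a set)}"

definition irreducible_perm :: "('a::finite \<Rightarrow> nat) \<Rightarrow> ('a \<Rightarrow> nat) \<Rightarrow> bool" where
  "irreducible_perm pt pb \<longleftrightarrow> is_perm pt pb \<and>
     (\<forall>k. 1 \<le> k \<and> k < card (UNIV::'a set) \<longrightarrow> {a. pt a \<le> k} \<noteq> {a. pb a \<le> k})"

definition Omega :: "('a \<Rightarrow> nat) \<Rightarrow> ('a \<Rightarrow> nat) \<Rightarrow> 'a \<Rightarrow> 'a \<Rightarrow> int" where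
  "Omega pt pb \<alpha> \<beta> =
     (if pt \<alpha> < pt \<beta> \<and> pb \<alpha> > pb \<beta> then 1
      else if pt \<alpha> > pt \<beta> \<and> pb \<alpha> < pb \<beta> then -1 else 0)"

definition sform :: "('a::finite \<Rightarrow> nat) \<Rightarrow> ('a \<Rightarrow> nat) \<Rightarrow> ('a \<Rightarrow> int) \<Rightarrow> ('a \<Rightarrow> int) \<Rightarrow> int" where
  "sform pt pb u v = (\<Sum>\<alpha>\<in>UNIV. \<Sum>\<beta>\<in>UNIV. u \<alpha> * Omega pt pb \<alpha> \<beta> * v \<beta>)"

definition transvection :: "('a::finite \<Rightarrow> nat) \<Rightarrow> ('a \<Rightarrow> nat) \<Rightarrow> ('a \<Rightarrow> int) \<Rightarrow> ('a \<Rightarrow> int) \<Rightarrow> ('a \<Rightarrow> int)" where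
  "transvection pt pb v u = (\<lambda>\<alpha>. u \<alpha> + sform pt pb v u * v \<alpha>)"

inductive_set transv_group :: "('a::finite \<Rightarrow> nat) \<Rightarrow> ('a \<Rightarrow> nat) \<Rightarrow> ('a \<Rightarrow> int) set
    \<Rightarrow> (('a \<Rightarrow> int) \<Rightarrow> ('a \<Rightarrow> int)) set"
  for pt pb V where
  id_in: "id \<in> transv_group pt pb V"
| gen: "v \<in> V \<Longrightarrow> g \<in> transv_group pt pb V \<Longrightarrow> transvection pt pb v \<circ> g \<in> transv_group pt pb V"
| gen_inv: "v \<in> V \<Longrightarrow> g \<in> transv_group pt pb V \<Longrightarrow> inv (transvection pt pb v) \<circ> g \<in> transv_group pt pb V"

end

theory Submission
  imports Defs
begin

definition tr :: "('a::finite \<Rightarrow> nat) \<Rightarrow> ('a \<Rightarrow> nat) \<Rightarrow> int \<Rightarrow> ('a \<Rightarrow> int) \<Rightarrow> ('a \<Rightarrow> int) \<Rightarrow> ('a \<Rightarrow> int)" where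
  "tr pt pb k w u = (\<lambda>\<alpha>. u \<alpha> + k * sform pt pb w u * w \<alpha>)"

lemma sform_add_l: "sform pt pb (\<lambda>\<alpha>. x \<alpha> + y \<alpha>) z = sform pt pb x z + sform pt pb y z"
  unfolding sform_def by (simp add: algebra_simps sum.distrib)
lemma sform_add_r: "sform pt pb z (\<lambda>\<alpha>. x \<alpha> + y \<alpha>) = sform pt pb z x + sform pt pb z y"
  unfolding sform_def by (simp add: algebra_simps sum.distrib)
lemma sform_diff_l: "sform pt pb (\<lambda>\<alpha>. x \<alpha> - y \<alpha>) z = sform pt pb x z - sform pt pb y z"
  unfolding sform_def by (simp add: algebra_simps sum_subtractf)
lemma sform_diff_r: "sform pt pb z (\<lambda>\<alpha>. x \<alpha> - y \<alpha>) = sform pt pb z x - sform pt pb z y"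
  unfolding sform_def by (simp add: algebra_simps sum_subtractf)
lemma sform_neg_l: "sform pt pb (\<lambda>\<alpha>. - x \<alpha>) z = - sform pt pb x z"
  unfolding sform_def by (simp add: sum_negf)
lemma sform_neg_r: "sform pt pb z (\<lambda>\<alpha>. - x \<alpha>) = - sform pt pb z x"
  unfolding sform_def by (simp add: sum_negf)
lemma sform_smult_l: "sform pt pb (\<lambda>\<alpha>. k * x \<alpha>) z = k * sform pt pb x z"
  unfolding sform_def by (simp add: sum_distrib_left mult.assoc)
lemma sform_smult_r: "sform pt pb z (\<lambda>\<alpha>. k * x \<alpha>) = k * sform pt pb z x"
  unfolding sform_def by (simp add: sum_distrib_left algebra_simps)

lemma sform_smult_l2: "sform pt pb (\<lambda>\<alpha>. x \<alpha> * k) z = sform pt pb x z * k"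
  using sform_smult_l[of pt pb k x z] by (simp add: mult.commute)
lemma sform_smult_r2: "sform pt pb z (\<lambda>\<alpha>. x \<alpha> * k) = sform pt pb z x * k"
  using sform_smult_r[of pt pb z k x] by (simp add: mult.commute)

lemma Omega_anti: "Omega pt pb \<beta> \<alpha> = - Omega pt pb \<alpha> \<beta>"
  by (auto simp: Omega_def)

lemma sform_antisym: "sform pt pb y x = - sform pt pb x y"
  unfolding sform_def
  apply (subst sum.swap)
  apply (subst (2) Omega_anti)
  by (simp add: sum_negf algebra_simps)

lemma sform_self[simp]: "sform pt pb x x = 0"
  using sform_antisym[of pt pb x x] by simp

lemmas bil = sform_add_l sform_add_r sform_diff_l sform_diff_r sform_neg_l sform_neg_r
  sform_smult_l sform_smult_r sform_smult_l2 sform_smult_r2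

lemma tr_sform: "sform pt pb w (tr pt pb k w u) = sform pt pb w u"
  unfolding tr_def by (simp add: bil)

lemma tr_add: "tr pt pb k w \<circ> tr pt pb m w = tr pt pb (k + m) w"
  unfolding tr_def by (rule ext) (simp add: bil algebra_simps)

lemma tr_zero: "tr pt pb 0 w = id"
  unfolding tr_def by (rule ext) simp

lemma tr_scale: "tr pt pb k (\<lambda>\<alpha>. m * s \<alpha>) = tr pt pb (m * m * k) s"
  unfolding tr_def by (rule ext)+ (simp add: bil algebra_simps)

lemma tr_neg: "tr pt pb k (\<lambda>\<alpha>. - s \<alpha>) = tr pt pb k s"
  unfolding tr_def by (rule ext)+ (simp add: bil algebra_simps)

lemma tr_conj: "tr pt pb k w \<circ> tr pt pb d v \<circ> tr pt pb (-k) w = tr pt pb d (tr pt pb k w v)"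
proof (rule ext)
  fix u
  have a: "sform pt pb v w = - sform pt pb w v" by (rule sform_antisym)
  show "(tr pt pb k w \<circ> tr pt pb d v \<circ> tr pt pb (-k) w) u = tr pt pb d (tr pt pb k w v) u"
    unfolding tr_def by (rule ext) (simp add: bil a algebra_simps)
qed

lemma transvection_tr: "transvection pt pb v = tr pt pb 1 v"
  unfolding transvection_def tr_def by (rule ext) simp

lemma inv_transvection: "inv (transvection pt pb v) = tr pt pb (-1) v"
  unfolding transvection_tr
  by (rule inv_unique_comp) (simp_all add: tr_add tr_zero)

lemma G_comp: "g \<in> transv_group pt pb V \<Longrightarrow> h \<in> transv_group pt pb V \<Longrightarrow> g \<circ> h \<in> transv_group pt pb V"
  by (induction g rule: transv_group.induct)
     (auto simp: o_assoc[symmetric] intro: transv_group.intros)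

lemma P_pow:
  assumes "tr pt pb 1 w \<in> transv_group pt pb V" "tr pt pb (-1) w \<in> transv_group pt pb V"
  shows "tr pt pb k w \<in> transv_group pt pb V"
proof (induct k rule: int_induct[where k=0])
  case base
  then show ?case by (metis tr_zero transv_group.id_in)
next
  case (step1 i)
  have "tr pt pb (i+1) w = tr pt pb 1 w \<circ> tr pt pb i w" by (simp add: tr_add add.commute)
  then show ?case using G_comp[OF assms(1) step1(2)] by (simp only:)
next
  case (step2 i)
  have "tr pt pb (i - 1) w = tr pt pb (-1) w \<circ> tr pt pb i w" by (simp add: tr_add)
  then show ?case using G_comp[OF assms(2) step2(2)] by (simp only:)
qed

lemma P_move:
  assumes "\<forall>k. tr pt pb k w \<in> transv_group pt pb V" "\<forall>k. tr pt pb k v \<in> transv_group pt pb V"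
  shows "\<forall>k. tr pt pb k (tr pt pb m w v) \<in> transv_group pt pb V"
proof
  fix k
  show "tr pt pb k (tr pt pb m w v) \<in> transv_group pt pb V"
    unfolding tr_conj[symmetric] using assms by (auto intro!: G_comp)
qed

lemma sq_id:
  assumes "sform pt pb r s = 0" "\<sigma> * \<sigma> = 1"
  shows "tr pt pb 1 r \<circ> tr pt pb 1 r
    = tr pt pb 1 (\<lambda>\<alpha>. r \<alpha> + \<sigma> * s \<alpha>) \<circ> tr pt pb 1 (\<lambda>\<alpha>. r \<alpha> - \<sigma> * s \<alpha>) \<circ> tr pt pb (-2) s"
proof (rule ext)
  fix u
  have a: "sform pt pb s r = 0" using assms(1) sform_antisym[of pt pb s r] by simp
  have b: "\<sigma> * (\<sigma> * x) = x" for x :: int using assms(2) by (simp add: mult.assoc[symmetric])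
  show "(tr pt pb 1 r \<circ> tr pt pb 1 r) u = (tr pt pb 1 (\<lambda>\<alpha>. r \<alpha> + \<sigma> * s \<alpha>) \<circ> tr pt pb 1 (\<lambda>\<alpha>. r \<alpha> - \<sigma> * s \<alpha>) \<circ> tr pt pb (-2) s) u"
    unfolding tr_def by (rule ext) (simp add: bil a assms(1) algebra_simps b)
qed

lemma key:
  fixes a b c d :: "'a::finite \<Rightarrow> int"
    and e1 e2 e3 e4 :: int
  assumes Pa: "\<forall>k. tr pt pb k a \<in> transv_group pt pb V"
    and Pb: "\<forall>k. tr pt pb k b \<in> transv_group pt pb V"
    and Pc: "\<forall>k. tr pt pb k c \<in> transv_group pt pb V"
    and Pd: "\<forall>k. tr pt pb k d \<in> transv_group pt pb V"
    and ab: "sform pt pb a b = 0" and ac: "sform pt pb a c = 0"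
    and bc: "sform pt pb b c = e2" and ad: "sform pt pb a d = e1"
    and bd: "sform pt pb b d = e3" and cd: "sform pt pb c d = e4"
    and e1: "e1 = 1 \<or> e1 = -1" and e2: "e2 = 1 \<or> e2 = -1"
    and e3: "e3 = 1 \<or> e3 = -1" and e4: "e4 = 1 \<or> e4 = -1"
  shows "tr pt pb 1 (\<lambda>\<alpha>. a \<alpha> + b \<alpha>) \<circ> tr pt pb 1 (\<lambda>\<alpha>. a \<alpha> + b \<alpha>) \<in> transv_group pt pb V"
proof -
  have ba: "sform pt pb b a = 0" using ab sform_antisym[of pt pb b a] by simp
  have ca: "sform pt pb c a = 0" using ac sform_antisym[of pt pb c a] by simp
  have cb: "sform pt pb c b = - e2" using bc sform_antisym[of pt pb c b] by simp
  have da: "sform pt pb d a = - e1" using ad sform_antisym[of pt pb d a] by simp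
  have db: "sform pt pb d b = - e3" using bd sform_antisym[of pt pb d b] by simp
  have dc: "sform pt pb d c = - e4" using cd sform_antisym[of pt pb d c] by simp
  note fs = ab ac bc ad bd cd ba ca cb da db dc
  define s1 where "s1 = tr pt pb (-e4*e2*(e1+e3)) c d"
  define s where "s = tr pt pb (-e1*e2*e4) b s1"
  define w where "w = tr pt pb 1 b s"
  define z where "z = tr pt pb (-1) b s"
  define rp where "rp = tr pt pb 1 w a"
  define rm where "rm = tr pt pb (-1) z a"
  have Ps1: "\<forall>k. tr pt pb k s1 \<in> transv_group pt pb V" unfolding s1_def by (rule P_move[OF Pc Pd])
  have Ps: "\<forall>k. tr pt pb k s \<in> transv_group pt pb V" unfolding s_def by (rule P_move[OF Pb Ps1])
  have Pw: "\<forall>k. tr pt pb k w \<in> transv_group pt pb V" unfolding w_def by (rule P_move[OF Pb Ps])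
  have Pz: "\<forall>k. tr pt pb k z \<in> transv_group pt pb V" unfolding z_def by (rule P_move[OF Pb Ps])
  have Prp: "\<forall>k. tr pt pb k rp \<in> transv_group pt pb V" unfolding rp_def by (rule P_move[OF Pw Pa])
  have Prm: "\<forall>k. tr pt pb k rm \<in> transv_group pt pb V" unfolding rm_def by (rule P_move[OF Pz Pa])
  have rp_eq: "rp = (\<lambda>\<alpha>. (\<lambda>\<alpha>. a \<alpha> + b \<alpha>) \<alpha> + (-e1) * s \<alpha>)"
    unfolding rp_def w_def s_def s1_def tr_def
    using e1 e2 e3 e4 by (intro ext) (elim disjE; simp add: bil fs algebra_simps)
  have rm_eq: "rm = (\<lambda>\<alpha>. (\<lambda>\<alpha>. a \<alpha> + b \<alpha>) \<alpha> - (-e1) * s \<alpha>)"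
    unfolding rm_def z_def s_def s1_def tr_def
    using e1 e2 e3 e4 by (intro ext) (elim disjE; simp add: bil fs algebra_simps)
  have orth: "sform pt pb (\<lambda>\<alpha>. a \<alpha> + b \<alpha>) s = 0"
    unfolding s_def s1_def tr_def
    using e1 e2 e3 e4 by (elim disjE; simp add: bil fs algebra_simps)
  have sig: "(-e1) * (-e1) = 1" using e1 by auto
  show ?thesis
    unfolding sq_id[OF orth sig] rp_eq[symmetric] rm_eq[symmetric]
    using Prp Prm Ps by (auto intro!: G_comp)
qed

theorem corollary2p10:
  fixes pt pb :: "'a::finite \<Rightarrow> nat" and v1 v2 v3 v4 :: "'a \<Rightarrow> int"
  assumes "irreducible_perm pt pb"
    and "\<forall>i<4. \<forall>j<4. \<bar>sform pt pb ([v1, v2, v3, v4] ! i) ([v1, v2, v3, v4] ! j)\<bar>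
           = [[0,0,0,1],[0,0,1,1],[0,1,0,1],[1,1,1,0::int]] ! i ! j"
  shows "transvection pt pb (v1 + v2) \<circ> transvection pt pb (v1 + v2) \<in> transv_group pt pb {v1, v2, v3, v4}
     \<and> transvection pt pb (v1 - v2) \<circ> transvection pt pb (v1 - v2) \<in> transv_group pt pb {v1, v2, v3, v4}
     \<and> transvection pt pb (v1 + v3) \<circ> transvection pt pb (v1 + v3) \<in> transv_group pt pb {v1, v2, v3, v4}
     \<and> transvection pt pb (v1 - v3) \<circ> transvection pt pb (v1 - v3) \<in> transv_group pt pb {v1, v2, v3, v4}"
proof -
  let ?G = "transv_group pt pb {v1, v2, v3, v4}"
  note h = assms(2)[rule_format]
  have x12: "sform pt pb v1 v2 = 0" using h[of 0 1] by simp
  have x13: "sform pt pb v1 v3 = 0" using h[of 0 2] by simp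
  have a23: "\<bar>sform pt pb v2 v3\<bar> = 1" using h[of 1 2] by simp
  have a14: "\<bar>sform pt pb v1 v4\<bar> = 1" using h[of 0 3] by simp
  have a24: "\<bar>sform pt pb v2 v4\<bar> = 1" using h[of 1 3] by simp
  have a34: "\<bar>sform pt pb v3 v4\<bar> = 1" using h[of 2 3] by simp
  have pm: "\<bar>x\<bar> = 1 \<Longrightarrow> x = 1 \<or> x = -1" "\<bar>x\<bar> = 1 \<Longrightarrow> -x = 1 \<or> -x = -1" for x :: int by auto
  have P: "\<forall>k. tr pt pb k v \<in> ?G" if "v \<in> {v1, v2, v3, v4}" for v
  proof
    fix k
    have 1: "tr pt pb 1 v \<in> ?G"
      using transv_group.gen[OF that transv_group.id_in] by (simp add: transvection_tr)
    have 2: "tr pt pb (-1) v \<in> ?G"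
      using transv_group.gen_inv[OF that transv_group.id_in] by (simp add: inv_transvection)
    show "tr pt pb k v \<in> ?G" by (rule P_pow[OF 1 2])
  qed
  have P1: "\<forall>k. tr pt pb k v1 \<in> ?G" and P2: "\<forall>k. tr pt pb k v2 \<in> ?G"
    and P3: "\<forall>k. tr pt pb k v3 \<in> ?G" and P4: "\<forall>k. tr pt pb k v4 \<in> ?G" by (auto intro!: P)
  have P2n: "\<forall>k. tr pt pb k (\<lambda>\<alpha>. - v2 \<alpha>) \<in> ?G" using P2 by (simp add: tr_neg)
  have P3n: "\<forall>k. tr pt pb k (\<lambda>\<alpha>. - v3 \<alpha>) \<in> ?G" using P3 by (simp add: tr_neg)
  have s32: "sform pt pb v3 v2 = - sform pt pb v2 v3" by (rule sform_antisym)
  have r1: "tr pt pb 1 (\<lambda>\<alpha>. v1 \<alpha> + v2 \<alpha>) \<circ> tr pt pb 1 (\<lambda>\<alpha>. v1 \<alpha> + v2 \<alpha>) \<in> ?G"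
    by (rule key[OF P1 P2 P3 P4 x12 x13 refl refl refl refl pm(1)[OF a14] pm(1)[OF a23] pm(1)[OF a24] pm(1)[OF a34]])
  have pm14: "sform pt pb v1 v4 = 1 \<or> sform pt pb v1 v4 = -1" using pm(1)[OF a14] .
  have pm23: "sform pt pb v2 v3 = 1 \<or> sform pt pb v2 v3 = -1" using pm(1)[OF a23] .
  have pm24: "sform pt pb v2 v4 = 1 \<or> sform pt pb v2 v4 = -1" using pm(1)[OF a24] .
  have pm34: "sform pt pb v3 v4 = 1 \<or> sform pt pb v3 v4 = -1" using pm(1)[OF a34] .
  have nm23: "- sform pt pb v2 v3 = 1 \<or> - sform pt pb v2 v3 = -1" using pm(2)[OF a23] .
  have nm24: "- sform pt pb v2 v4 = 1 \<or> - sform pt pb v2 v4 = -1" using pm(2)[OF a24] .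
  have nm34: "- sform pt pb v3 v4 = 1 \<or> - sform pt pb v3 v4 = -1" using pm(2)[OF a34] .
  have f1: "sform pt pb v1 (\<lambda>\<alpha>. - v2 \<alpha>) = 0" by (simp add: bil x12)
  have f2: "sform pt pb (\<lambda>\<alpha>. - v2 \<alpha>) v3 = - sform pt pb v2 v3" by (simp add: bil)
  have f3: "sform pt pb (\<lambda>\<alpha>. - v2 \<alpha>) v4 = - sform pt pb v2 v4" by (simp add: bil)
  have r2: "tr pt pb 1 (\<lambda>\<alpha>. v1 \<alpha> + (- v2 \<alpha>)) \<circ> tr pt pb 1 (\<lambda>\<alpha>. v1 \<alpha> + (- v2 \<alpha>)) \<in> ?G"
    by (rule key[OF P1 P2n P3 P4 f1 x13 f2 refl f3 refl pm14 nm23 nm24 pm34])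
  have r3: "tr pt pb 1 (\<lambda>\<alpha>. v1 \<alpha> + v3 \<alpha>) \<circ> tr pt pb 1 (\<lambda>\<alpha>. v1 \<alpha> + v3 \<alpha>) \<in> ?G"
    by (rule key[OF P1 P3 P2 P4 x13 x12 s32 refl refl refl pm14 nm23 pm34 pm24])
  have g1: "sform pt pb v1 (\<lambda>\<alpha>. - v3 \<alpha>) = 0" by (simp add: bil x13)
  have g2: "sform pt pb (\<lambda>\<alpha>. - v3 \<alpha>) v2 = sform pt pb v2 v3" by (simp add: bil s32)
  have g3: "sform pt pb (\<lambda>\<alpha>. - v3 \<alpha>) v4 = - sform pt pb v3 v4" by (simp add: bil)
  have r4: "tr pt pb 1 (\<lambda>\<alpha>. v1 \<alpha> + (- v3 \<alpha>)) \<circ> tr pt pb 1 (\<lambda>\<alpha>. v1 \<alpha> + (- v3 \<alpha>)) \<in> ?G"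
    by (rule key[OF P1 P3n P2 P4 g1 x12 g2 refl g3 refl pm14 pm23 nm34 pm24])
  have e1: "v1 + v2 = (\<lambda>\<alpha>. v1 \<alpha> + v2 \<alpha>)" "v1 + v3 = (\<lambda>\<alpha>. v1 \<alpha> + v3 \<alpha>)"
    "v1 - v2 = (\<lambda>\<alpha>. v1 \<alpha> + (- v2 \<alpha>))" "v1 - v3 = (\<lambda>\<alpha>. v1 \<alpha> + (- v3 \<alpha>))"
    by (auto simp: fun_eq_iff)
  show ?thesis unfolding transvection_tr e1 using r1 r2 r3 r4 by blast
qed

end
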